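(* Let $0<b<1$. For every instance, the naive future-biased agent with bias $b$ incurs cost $C_f(s)\le \frac{1}{b}C_o(s)$; that is, its cost ratio is at most $1/b$.
   Context: An instance is a finite directed acyclic graph $G=(V,E)$ with nonnegative edge costs $c(u,v)$, start node $s$ and target node $t$, where $t$ is the unique node with no outgoing edges; $C_o(u)$ is the minimum cost of a $u$–$t$ path. The naive agent with bias $b$ (called future-biased when $b<1$): $C_f(t)=0$, and for $u\ne t$, $S_f(u)\in\arg\min_{v:(u,v)\in E}(b\,c(u,v)+C_o(v))$, $C_f(u)=c(u,S_f(u))+C_f(S_f(u))$; $C_f(s)$ is the cost it incurs traveling from $s$ to $t$, and its cost ratio is $C_f(s)/C_o(s)$. *)

theory Defs
  imports Complex_Main
begin

definition is_path :: "('a \<times> 'a) set \<Rightarrow> 'a \<Rightarrow> 'a \<Rightarrow> 'a list \<Rightarrow> bool" where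
  "is_path E u w xs \<longleftrightarrow> xs \<noteq> [] \<and> hd xs = u \<and> last xs = w \<and>
     (\<forall>i < length xs - 1. (xs ! i, xs ! Suc i) \<in> E)"

definition path_cost :: "('a \<Rightarrow> 'a \<Rightarrow> real) \<Rightarrow> 'a list \<Rightarrow> real" where
  "path_cost c xs = (\<Sum>i < length xs - 1. c (xs ! i) (xs ! Suc i))"

definition opt_cost :: "('a \<times> 'a) set \<Rightarrow> ('a \<Rightarrow> 'a \<Rightarrow> real) \<Rightarrow> 'a \<Rightarrow> 'a \<Rightarrow> real" where
  "opt_cost E c t u = Min {path_cost c xs | xs. is_path E u t xs}"

definition naive_choice :: "('a \<times> 'a) set \<Rightarrow> ('a \<Rightarrow> 'a \<Rightarrow> real) \<Rightarrow> 'a \<Rightarrow> real \<Rightarrow> 'a \<Rightarrow> 'a \<Rightarrow> bool" where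
  "naive_choice E c t b u v \<longleftrightarrow> (u, v) \<in> E \<and>
     (\<forall>w. (u, w) \<in> E \<longrightarrow> b * c u v + opt_cost E c t v \<le> b * c u w + opt_cost E c t w)"

text \<open>C_f(u): cost incurred by following the choice function S from u until t.
  C_f(t) = 0 and C_f(u) = c(u, S u) + C_f(S u).\<close>
definition agent_cost :: "('a \<Rightarrow> 'a \<Rightarrow> real) \<Rightarrow> ('a \<Rightarrow> 'a) \<Rightarrow> 'a \<Rightarrow> 'a \<Rightarrow> real" where
  "agent_cost c S t u =
     (let n = (LEAST n. (S ^^ n) u = t) in (\<Sum>i < n. c ((S ^^ i) u) ((S ^^ Suc i) u)))"

end

theory Submission
  imports Defs
begin

lemma is_path_single: "is_path E u w [x] \<longleftrightarrow> x = u \<and> x = w"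
  unfolding is_path_def by auto

lemma is_path_Cons2: "is_path E u w (x#y#ys) \<longleftrightarrow> x = u \<and> (x,y) \<in> E \<and> is_path E y w (y#ys)"
  unfolding is_path_def by (auto simp: All_less_Suc2)

lemma path_cost_Cons2: "path_cost c (x#y#ys) = c x y + path_cost c (y#ys)"
  unfolding path_cost_def by (simp only: length_Cons diff_Suc_1 sum.lessThan_Suc_shift nth_Cons_0 nth_Cons_Suc)

lemma is_path_trancl:
  assumes "is_path E u w xs" "i < j" "j < length xs"
  shows "(xs!i, xs!j) \<in> E\<^sup>+"
  using assms(2,3)
proof (induction j)
  case 0 then show ?case by simp
next
  case (Suc j)
  have e: "(xs!j, xs!Suc j) \<in> E" using assms(1) Suc.prems unfolding is_path_def by auto
  show ?case
  proof (cases "i = j")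
    case True then show ?thesis using e by auto
  next
    case False
    then have "(xs!i, xs!j) \<in> E\<^sup>+" using Suc by auto
    then show ?thesis using e by auto
  qed
qed

lemma is_path_distinct:
  assumes "acyclic E" "is_path E u w xs"
  shows "distinct xs"
proof -
  { fix i j assume ij: "i < length xs" "j < length xs" "i \<noteq> j" "xs!i = xs!j"
    have False
    proof (cases "i < j")
      case True
      then have "(xs!i, xs!j) \<in> E\<^sup>+" using is_path_trancl[OF assms(2), of i j] ij(2) True by blast
      then show False using assms(1) ij(4) unfolding acyclic_def by metis
    next
      case False
      then have "(xs!j, xs!i) \<in> E\<^sup>+" using is_path_trancl[OF assms(2), of j i] ij False by (meson linorder_neqE_nat)
      then show False using assms(1) ij(4) unfolding acyclic_def by metis
    qed }
  then show ?thesis by (auto simp: distinct_conv_nth)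
qed

lemma is_path_set:
  assumes "E \<subseteq> V \<times> V" "is_path E u w xs" "u \<in> V"
  shows "set xs \<subseteq> V"
proof
  fix x assume "x \<in> set xs"
  then obtain i where i: "i < length xs" "xs!i = x" by (auto simp: in_set_conv_nth)
  show "x \<in> V"
  proof (cases i)
    case 0 then show ?thesis using assms i by (auto simp: is_path_def hd_conv_nth)
  next
    case (Suc k)
    then have "(xs!k, xs!i) \<in> E" using assms(2) i unfolding is_path_def by auto
    then show ?thesis using assms(1) i by auto
  qed
qed

lemma paths_finite:
  assumes "finite V" "E \<subseteq> V \<times> V" "acyclic E" "u \<in> V"
  shows "finite {path_cost c xs | xs. is_path E u w xs}"
proof -
  have "{xs. is_path E u w xs} \<subseteq> {xs. set xs \<subseteq> V \<and> length xs \<le> card V}"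
  proof clarify
    fix xs assume p: "is_path E u w xs"
    have s: "set xs \<subseteq> V" using is_path_set[OF assms(2) p assms(4)] .
    have "length xs = card (set xs)" using is_path_distinct[OF assms(3) p] by (simp add: distinct_card)
    also have "\<dots> \<le> card V" using s assms(1) by (simp add: card_mono)
    finally show "set xs \<subseteq> V \<and> length xs \<le> card V" using s by simp
  qed
  then have "finite {xs. is_path E u w xs}"
    using finite_lists_length_le[OF assms(1)] finite_subset by blast
  moreover have "{path_cost c xs | xs. is_path E u w xs} = path_cost c ` {xs. is_path E u w xs}" by blast
  ultimately show ?thesis by simp
qed

theorem claim7:
  fixes V :: "'a set" and E :: "('a \<times> 'a) set" and c :: "'a \<Rightarrow> 'a \<Rightarrow> real"
    and s t :: 'a and b :: real and S :: "'a \<Rightarrow> 'a"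
  assumes "finite V" and "E \<subseteq> V \<times> V" and "acyclic E"
    and "\<forall>(u, v) \<in> E. c u v \<ge> 0"
    and "s \<in> V" and "t \<in> V"
    and "\<forall>u \<in> V. (\<forall>v. (u, v) \<notin> E) \<longleftrightarrow> u = t"
    and "0 < b" and "b < 1"
    and "\<forall>u \<in> V - {t}. naive_choice E c t b u (S u)"
  shows "agent_cost c S t s \<le> (1 / b) * opt_cost E c t s"
proof -
  have fE: "finite E" using assms(1,2) finite_subset finite_cartesian_product by blast
  have wf: "wf (E\<inverse>)" using finite_acyclic_wf_converse[OF fE assms(3)] .
  have tno: "\<And>v. (t, v) \<notin> E" using assms(6,7) by auto
  have succ: "\<And>u. u \<in> V \<Longrightarrow> u \<noteq> t \<Longrightarrow> (u, S u) \<in> E" using assms(10) unfolding naive_choice_def by auto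
  have inV: "\<And>u v. (u, v) \<in> E \<Longrightarrow> v \<in> V" using assms(2) by auto
  have fin: "\<And>u. u \<in> V \<Longrightarrow> finite {path_cost c xs | xs. is_path E u t xs}"
    using paths_finite[OF assms(1,2,3)] by blast
  have ex: "\<And>u. u \<in> V \<Longrightarrow> \<exists>xs. is_path E u t xs"
  proof -
    fix u show "u \<in> V \<Longrightarrow> \<exists>xs. is_path E u t xs"
    proof (induction u rule: wf_induct_rule[OF wf])
      case (1 u)
      show ?case
      proof (cases "u = t")
        case True then show ?thesis using is_path_single by metis
      next
        case False
        then obtain v where e: "(u,v) \<in> E" using assms(7) 1 by auto
        then obtain ys where p: "is_path E v t ys" using 1 inV by blast
        then obtain ys' where "ys = v # ys'" unfolding is_path_def by (cases ys) auto
        then have "is_path E u t (u # ys)"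
          using p e by (cases ys') (auto simp: is_path_Cons2 is_path_single)
        then show ?thesis by blast
      qed
    qed
  qed
  have optt: "opt_cost E c t t = 0"
  proof -
    have "{path_cost c xs | xs. is_path E t t xs} = {0}"
    proof (rule set_eqI, rule iffI)
      fix x assume "x \<in> {path_cost c xs | xs. is_path E t t xs}"
      then obtain xs where p: "is_path E t t xs" "x = path_cost c xs" by blast
      then obtain ys where xs: "xs = t # ys" unfolding is_path_def by (cases xs) auto
      show "x \<in> {0}"
      proof (cases ys)
        case Nil then show ?thesis using p xs by (simp add: path_cost_def)
      next
        case (Cons y zs) then show ?thesis using p xs tno by (simp add: is_path_Cons2)
      qed
    next
      fix x assume "x \<in> {0::real}"
      then have "x = path_cost c [t]" "is_path E t t [t]" by (auto simp: path_cost_def is_path_single)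
      then show "x \<in> {path_cost c xs | xs. is_path E t t xs}" by blast
    qed
    then show ?thesis unfolding opt_cost_def by simp
  qed
  have optstep: "\<And>u. u \<in> V \<Longrightarrow> u \<noteq> t \<Longrightarrow> \<exists>w. (u,w) \<in> E \<and> c u w + opt_cost E c t w \<le> opt_cost E c t u"
  proof -
    fix u assume u: "u \<in> V" "u \<noteq> t"
    let ?A = "{path_cost c xs | xs. is_path E u t xs}"
    have "?A \<noteq> {}" using ex[OF u(1)] by blast
    then have "opt_cost E c t u \<in> ?A" unfolding opt_cost_def using Min_in fin[OF u(1)] by blast
    then obtain xs where p: "is_path E u t xs" and oc: "opt_cost E c t u = path_cost c xs" by auto
    then obtain ys where xs: "xs = u # ys" unfolding is_path_def by (cases xs) auto
    then obtain w zs where ys: "ys = w # zs" using p u(2) by (cases ys) (auto simp: is_path_single)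
    have e: "(u,w) \<in> E" and p2: "is_path E w t (w#zs)" using p xs ys by (auto simp: is_path_Cons2)
    have "opt_cost E c t w \<le> path_cost c (w#zs)"
      unfolding opt_cost_def using p2 fin[OF inV[OF e]] by (intro Min_le) auto
    then show "\<exists>w. (u,w) \<in> E \<and> c u w + opt_cost E c t w \<le> opt_cost E c t u"
      using e oc xs ys path_cost_Cons2[of c u w zs] by auto
  qed
  have main: "\<And>u. u \<in> V \<Longrightarrow> (\<exists>n. (S^^n) u = t) \<and> b * agent_cost c S t u \<le> opt_cost E c t u"
  proof -
    fix u show "u \<in> V \<Longrightarrow> (\<exists>n. (S^^n) u = t) \<and> b * agent_cost c S t u \<le> opt_cost E c t u"
    proof (induction u rule: wf_induct_rule[OF wf])
      case (1 u)
      show ?case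
      proof (cases "u = t")
        case True
        have "agent_cost c S t u = 0" unfolding agent_cost_def using True by simp
        then show ?thesis using True optt by (metis funpow_0 mult_zero_right order_refl)
      next
        case False
        let ?v = "S u"
        have e: "(u, ?v) \<in> E" using succ 1 False by auto
        have IH: "(\<exists>n. (S^^n) ?v = t) \<and> b * agent_cost c S t ?v \<le> opt_cost E c t ?v"
          using 1 e inV by auto
        then obtain n where n: "(S^^n) ?v = t" by blast
        have sh: "\<And>m. (S^^Suc m) u = (S^^m) ?v" by (metis funpow_Suc_right o_apply)
        have L: "(LEAST m. (S^^m) u = t) = Suc (LEAST m. (S^^m) ?v = t)"
          using Least_Suc[of "\<lambda>m. (S^^m) u = t" "Suc n"] n False sh by simp
        have ac: "agent_cost c S t u = c u ?v + agent_cost c S t ?v"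
          unfolding agent_cost_def Let_def L sum.lessThan_Suc_shift
          by (simp only: sh funpow_0)
        obtain w where w: "(u,w) \<in> E" "c u w + opt_cost E c t w \<le> opt_cost E c t u"
          using optstep 1 False by blast
        have nc: "b * c u ?v + opt_cost E c t ?v \<le> b * c u w + opt_cost E c t w"
          using assms(10) 1 False w(1) unfolding naive_choice_def by auto
        have "0 \<le> c u w" using assms(4) w(1) by auto
        then have "b * c u w \<le> c u w" using assms(9) by (simp add: mult_left_le_one_le assms(8) less_imp_le)
        then have "b * agent_cost c S t u \<le> opt_cost E c t u"
          using ac IH nc w(2) by (simp add: algebra_simps)
        moreover have "(S^^Suc n) u = t" using sh n by simp
        ultimately show ?thesis by blast
      qed
    qed
  qed
  have "b * agent_cost c S t s \<le> opt_cost E c t s" using main assms(5) by blast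
  then show ?thesis using assms(8) by (simp add: field_simps)
qed

end
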